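(* Let $\mathbf{K}_1,\ldots,\mathbf{K}_M\in\mathbb{R}^{N\times N}$ be symmetric positive definite matrices, let $\epsilon>0$, $\gamma\ge0$, let $\mathbf{L}_{\mathcal G}$ be the Laplacian of an undirected weighted graph on $N$ nodes, and let $d\le N$. Consider $$\min_{\{\mathbf{A}_m\in\mathbb{R}^{N\times d}\},\,\mathbf{S}\in\mathbb{R}^{d\times N}}\ \sum_{m=1}^M\|\mathbf{A}_m^\top\mathbf{K}_m-\mathbf{S}\|_F^2+\gamma\,\mathrm{Tr}(\mathbf{S}\mathbf{L}_{\mathcal G}\mathbf{S}^\top)+\epsilon\sum_{m=1}^M\mathrm{Tr}(\mathbf{A}_m^\top\mathbf{K}_m\mathbf{A}_m)\quad\text{s.t.}\quad\mathbf{S}\mathbf{S}^\top=\mathbf{I}.$$ Let $\mathbf{C}_g:=\sum_{m=1}^M(\mathbf{K}_m+\epsilon\mathbf{I})^{-1}\mathbf{K}_m-\gamma\mathbf{L}_{\mathcal G}$ (a symmetric matrix). If $\hat{\mathbf{S}}^\top$ has as columns orthonormal eigenvectors of $\mathbf{C}_g$ associated with its $d$ largest eigenvalues, and $\hat{\mathbf{A}}_m:=(\mathbf{K}_m+\epsilon\mathbf{I})^{-1}\hat{\mathbf{S}}^\top$ for $m=1,\ldots,M$, then $(\{\hat{\mathbf{A}}_m\},\hat{\mathbf{S}})$ is a global minimizer of this problem.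
   Context: For an undirected graph on $N$ nodes with symmetric nonnegative weighted adjacency matrix $\mathbf{W}$, the Laplacian is $\mathbf{L}_{\mathcal G}:=\mathbf{D}-\mathbf{W}$, where $\mathbf{D}$ is diagonal with $i$-th diagonal entry $\sum_{j=1}^N w_{ij}$. (In the paper, $\mathbf{K}_m$ is a centered kernel matrix of the $m$-th view; with $\mathbf{K}_m=\mathbf{X}_m^\top\mathbf{X}_m$ this problem is the graph-regularized dual MCCA.) *)

theory Defs
  imports "Jordan_Normal_Form.Matrix" "Jordan_Normal_Form.Char_Poly"
begin

definition mtrace :: "real mat \<Rightarrow> real" where
  "mtrace A = (\<Sum>i<dim_row A. A $$ (i,i))"

definition frob_sq :: "real mat \<Rightarrow> real" where
  "frob_sq A = (\<Sum>i<dim_row A. \<Sum>j<dim_col A. (A $$ (i,j))\<^sup>2)"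

definition sym_pos_def :: "nat \<Rightarrow> real mat \<Rightarrow> bool" where
  "sym_pos_def N K \<longleftrightarrow> K \<in> carrier_mat N N \<and> K\<^sup>T = K \<and>
     (\<forall>v \<in> carrier_vec N. v \<noteq> 0\<^sub>v N \<longrightarrow> v \<bullet> (K *\<^sub>v v) > 0)"

definition minv :: "real mat \<Rightarrow> real mat" where
  "minv B = (SOME X. X \<in> carrier_mat (dim_row B) (dim_row B) \<and>
                     B * X = 1\<^sub>m (dim_row B) \<and> X * B = 1\<^sub>m (dim_row B))"

definition laplacian :: "real mat \<Rightarrow> real mat" where
  "laplacian W = mat (dim_row W) (dim_row W)
     (\<lambda>(i,j). (if i = j then (\<Sum>k<dim_row W. W $$ (i,k)) else 0) - W $$ (i,j))"

definition weighted_adj :: "nat \<Rightarrow> real mat \<Rightarrow> bool" where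
  "weighted_adj N W \<longleftrightarrow> W \<in> carrier_mat N N \<and> W\<^sup>T = W \<and>
     (\<forall>i<N. \<forall>j<N. W $$ (i,j) \<ge> 0)"

definition gmcca_obj ::
  "nat \<Rightarrow> (nat \<Rightarrow> real mat) \<Rightarrow> real \<Rightarrow> real \<Rightarrow> real mat \<Rightarrow> (nat \<Rightarrow> real mat) \<Rightarrow> real mat \<Rightarrow> real" where
  "gmcca_obj M K \<epsilon> \<gamma> L A S =
     (\<Sum>m\<in>{1..M}. frob_sq ((A m)\<^sup>T * K m - S))
     + \<gamma> * mtrace (S * L * S\<^sup>T)
     + \<epsilon> * (\<Sum>m\<in>{1..M}. mtrace ((A m)\<^sup>T * K m * A m))"

definition Cg :: "nat \<Rightarrow> nat \<Rightarrow> (nat \<Rightarrow> real mat) \<Rightarrow> real \<Rightarrow> real \<Rightarrow> real mat \<Rightarrow> real mat" where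
  "Cg N M K \<epsilon> \<gamma> L =
     mat N N (\<lambda>ij. \<Sum>m\<in>{1..M}. (minv (K m + \<epsilon> \<cdot>\<^sub>m 1\<^sub>m N) * K m) $$ ij)
       - \<gamma> \<cdot>\<^sub>m L"

end

theory Submission
  imports Defs
begin


definition dotN :: "nat \<Rightarrow> (nat \<Rightarrow> real) \<Rightarrow> (nat \<Rightarrow> real) \<Rightarrow> real" where
  "dotN n x y = (\<Sum>k<n. x k * y k)"
definition mvN :: "nat \<Rightarrow> real mat \<Rightarrow> (nat \<Rightarrow> real) \<Rightarrow> nat \<Rightarrow> real" where
  "mvN n K x j = (\<Sum>k<n. K $$ (j,k) * x k)"
definition qf :: "nat \<Rightarrow> (nat \<Rightarrow> real) \<Rightarrow> real mat \<Rightarrow> real" where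
  "qf n s X = (\<Sum>k<n. \<Sum>l<n. s k * X $$ (k,l) * s l)"
definition symN :: "nat \<Rightarrow> real mat \<Rightarrow> bool" where
  "symN n K \<longleftrightarrow> (\<forall>i<n. \<forall>j<n. K $$ (i,j) = K $$ (j,i))"

lemma dot_sym:
  assumes "symN n K"
  shows "dotN n x (mvN n K y) = dotN n y (mvN n K x)"
proof -
  have 1: "dotN n x (mvN n K y) = (\<Sum>k<n. \<Sum>l<n. x k * K$$(k,l) * y l)"
    by (simp add: dotN_def mvN_def sum_distrib_left mult.assoc)
  have 2: "dotN n y (mvN n K x) = (\<Sum>l<n. \<Sum>k<n. y l * K$$(l,k) * x k)"
    by (simp add: dotN_def mvN_def sum_distrib_left mult.assoc)
  have "(\<Sum>k<n. \<Sum>l<n. x k * K$$(k,l) * y l) = (\<Sum>l<n. \<Sum>k<n. x k * K$$(k,l) * y l)"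
    by (rule sum.swap)
  also have "\<dots> = (\<Sum>l<n. \<Sum>k<n. y l * K$$(l,k) * x k)"
    using assms unfolding symN_def by (intro sum.cong refl) (auto simp: mult.commute mult.left_commute)
  finally show ?thesis using 1 2 by simp
qed

lemma core_identity:
  fixes a a' s :: "nat \<Rightarrow> real" and \<epsilon> :: real
  assumes sym: "symN n K"
    and eq: "\<forall>j<n. mvN n K a' j + \<epsilon> * a' j = s j"
  defines "e \<equiv> \<lambda>k. a k - a' k"
  shows "(\<Sum>j<n. (mvN n K a j - s j)^2) + \<epsilon> * dotN n a (mvN n K a)
       = \<epsilon> * dotN n a' s + (\<Sum>j<n. (mvN n K e j)^2) + \<epsilon> * dotN n e (mvN n K e)"
proof -
  have Ka: "mvN n K a j = mvN n K a' j + mvN n K e j" for j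
  proof -
    have "mvN n K a j = (\<Sum>k<n. K$$(j,k) * a' k + K$$(j,k) * e k)"
      unfolding mvN_def e_def by (intro sum.cong refl) (simp add: algebra_simps)
    thus ?thesis by (simp add: sum.distrib mvN_def)
  qed
  define X where "X = (\<Sum>j<n. (mvN n K e j)^2)"
  define Y where "Y = dotN n a' (mvN n K e)"
  define Z where "Z = (\<Sum>j<n. (a' j)^2)"
  define Wq where "Wq = dotN n a' (mvN n K a')"
  define V where "V = dotN n e (mvN n K e)"
  have "(\<Sum>j<n. (mvN n K a j - s j)^2) = (\<Sum>j<n. (mvN n K e j)^2 - 2*\<epsilon>*(a' j * mvN n K e j) + \<epsilon>^2 * (a' j)^2)"
  proof (intro sum.cong refl)
    fix j assume "j \<in> {..<n}"
    hence "mvN n K a j - s j = mvN n K e j - \<epsilon> * a' j" using eq Ka by (simp add: algebra_simps)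
    thus "(mvN n K a j - s j)^2 = (mvN n K e j)^2 - 2*\<epsilon>*(a' j * mvN n K e j) + \<epsilon>^2 * (a' j)^2"
      by (simp only: power2_eq_square) (simp add: algebra_simps)
  qed
  also have "\<dots> = X - 2*\<epsilon>*Y + \<epsilon>^2 * Z"
    by (simp add: X_def Y_def Z_def dotN_def sum.distrib sum_subtractf sum_distrib_left)
  finally have A1: "(\<Sum>j<n. (mvN n K a j - s j)^2) = X - 2*\<epsilon>*Y + \<epsilon>^2 * Z" .
  have "dotN n a (mvN n K a) = (\<Sum>j<n. a' j * mvN n K a' j + a' j * mvN n K e j + e j * mvN n K a' j + e j * mvN n K e j)"
    unfolding dotN_def by (intro sum.cong refl) (simp add: Ka e_def algebra_simps)
  also have "\<dots> = Wq + Y + dotN n e (mvN n K a') + V"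
    by (simp add: Wq_def Y_def V_def dotN_def sum.distrib)
  also have "dotN n e (mvN n K a') = Y" unfolding Y_def by (rule dot_sym[OF sym])
  finally have A2: "dotN n a (mvN n K a) = Wq + 2*Y + V" by simp
  have "dotN n a' s = (\<Sum>j<n. a' j * mvN n K a' j + \<epsilon> * (a' j)^2)"
    unfolding dotN_def
  proof (intro sum.cong refl)
    fix j assume "j \<in> {..<n}"
    hence "s j = mvN n K a' j + \<epsilon> * a' j" using eq by simp
    thus "a' j * s j = a' j * mvN n K a' j + \<epsilon> * (a' j)^2" by (simp add: power2_eq_square algebra_simps)
  qed
  also have "\<dots> = Wq + \<epsilon> * Z" by (simp add: Wq_def Z_def dotN_def sum.distrib sum_distrib_left)
  finally have A3: "dotN n a' s = Wq + \<epsilon> * Z" .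
  show ?thesis unfolding A1 A2 A3 X_def[symmetric] V_def[symmetric]
    by (simp add: algebra_simps power2_eq_square)
qed

lemma mult_idx:
  assumes "A \<in> carrier_mat nr n" "B \<in> carrier_mat n nc" "i < nr" "j < nc"
  shows "(A * B) $$ (i,j) = (\<Sum>k<n. A $$ (i,k) * B $$ (k,j))"
  using assms by (simp add: scalar_prod_def atLeast0LessThan)

lemma mvN_vec:
  assumes "v \<in> carrier_vec n" "X \<in> carrier_mat n n" "j < n"
  shows "(X *\<^sub>v v) $ j = mvN n X (\<lambda>i. v $ i) j"
  using assms by (simp add: scalar_prod_def atLeast0LessThan mvN_def)

lemma dot_vec:
  assumes "w \<in> carrier_vec n"
  shows "v \<bullet> w = dotN n (\<lambda>i. v $ i) (\<lambda>i. w $ i)"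
  using assms by (simp add: scalar_prod_def atLeast0LessThan dotN_def)

lemma mvN_cong: "(\<And>k. k < n \<Longrightarrow> x k = y k) \<Longrightarrow> mvN n X x j = mvN n X y j"
  unfolding mvN_def by (intro sum.cong refl) auto

lemma dotN_cong: "(\<And>k. k < n \<Longrightarrow> x k = x' k) \<Longrightarrow> (\<And>k. k < n \<Longrightarrow> y k = y' k) \<Longrightarrow> dotN n x y = dotN n x' y'"
  unfolding dotN_def by (intro sum.cong refl) auto

lemma mvN_B:
  assumes "K \<in> carrier_mat n n" "j < n"
  shows "mvN n (K + \<epsilon> \<cdot>\<^sub>m 1\<^sub>m n) x j = mvN n K x j + \<epsilon> * x j"
proof -
  have "mvN n (K + \<epsilon> \<cdot>\<^sub>m 1\<^sub>m n) x j = (\<Sum>k<n. K $$ (j,k) * x k + (if j = k then \<epsilon> * x k else 0))"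
    unfolding mvN_def using assms by (intro sum.cong refl) (auto simp: algebra_simps)
  also have "\<dots> = mvN n K x j + \<epsilon> * x j" using assms by (simp add: sum.distrib mvN_def)
  finally show ?thesis .
qed

lemma sym_of_spd: "sym_pos_def N K \<Longrightarrow> symN N K"
  unfolding sym_pos_def_def symN_def
  by (metis carrier_matD(1) carrier_matD(2) index_transpose_mat(1))

lemma psd_of_spd:
  assumes "sym_pos_def N K"
  shows "dotN N x (mvN N K x) \<ge> 0"
proof -
  have K: "K \<in> carrier_mat N N" using assms unfolding sym_pos_def_def by auto
  define v where "v = vec N x"
  have v: "v \<in> carrier_vec N" unfolding v_def by simp
  show ?thesis
  proof (cases "v = 0\<^sub>v N")
    case True
    hence "\<forall>k<N. x k = 0" unfolding v_def by (metis index_vec index_zero_vec(1))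
    thus ?thesis unfolding dotN_def by simp
  next
    case False
    hence "v \<bullet> (K *\<^sub>v v) > 0" using assms v unfolding sym_pos_def_def by auto
    also have "v \<bullet> (K *\<^sub>v v) = dotN N (\<lambda>i. v $ i) (\<lambda>i. (K *\<^sub>v v) $ i)"
      by (rule dot_vec) (use K v in auto)
    also have "\<dots> = dotN N x (mvN N K x)"
    proof (rule dotN_cong)
      fix k assume k: "k < N"
      show "v $ k = x k" using k by (simp add: v_def)
      have "(K *\<^sub>v v) $ k = mvN N K (\<lambda>i. v $ i) k" by (rule mvN_vec[OF v K k])
      also have "\<dots> = mvN N K x k" by (rule mvN_cong) (simp add: v_def)
      finally show "(K *\<^sub>v v) $ k = mvN N K x k" .
    qed
    finally show ?thesis by simp
  qed
qed

lemma pd_of_spd: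
  assumes "sym_pos_def N K" "v \<in> carrier_vec N" "v \<noteq> 0\<^sub>v N"
  shows "dotN N (\<lambda>i. v $ i) (mvN N K (\<lambda>i. v $ i)) > 0"
proof -
  have K: "K \<in> carrier_mat N N" using assms unfolding sym_pos_def_def by auto
  have "v \<bullet> (K *\<^sub>v v) > 0" using assms unfolding sym_pos_def_def by auto
  also have "v \<bullet> (K *\<^sub>v v) = dotN N (\<lambda>i. v $ i) (\<lambda>i. (K *\<^sub>v v) $ i)"
    by (rule dot_vec) (use K assms in auto)
  also have "\<dots> = dotN N (\<lambda>i. v $ i) (mvN N K (\<lambda>i. v $ i))"
    by (rule dotN_cong) (auto simp: mvN_vec[OF assms(2) K])
  finally show ?thesis .
qed

lemma inv_exists:
  assumes "sym_pos_def N K" "\<epsilon> > 0"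
  shows "\<exists>X. X \<in> carrier_mat N N \<and> (K + \<epsilon> \<cdot>\<^sub>m 1\<^sub>m N) * X = 1\<^sub>m N \<and> X * (K + \<epsilon> \<cdot>\<^sub>m 1\<^sub>m N) = 1\<^sub>m N"
proof -
  have K: "K \<in> carrier_mat N N" using assms unfolding sym_pos_def_def by auto
  define B where "B = K + \<epsilon> \<cdot>\<^sub>m 1\<^sub>m N"
  have B: "B \<in> carrier_mat N N" unfolding B_def using K by auto
  have "det B \<noteq> 0"
  proof
    assume "det B = 0"
    then obtain v where v: "v \<in> carrier_vec N" "v \<noteq> 0\<^sub>v N" "B *\<^sub>v v = 0\<^sub>v N"
      using det_0_iff_vec_prod_zero[OF B] by auto
    have "0 = dotN N (\<lambda>i. v $ i) (\<lambda>i. (B *\<^sub>v v) $ i)"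
      unfolding dotN_def using v by simp
    also have "\<dots> = dotN N (\<lambda>i. v $ i) (\<lambda>i. mvN N K (\<lambda>i. v $ i) i + \<epsilon> * v $ i)"
    proof (rule dotN_cong)
      fix k assume k: "k < N"
      have "(B *\<^sub>v v) $ k = mvN N B (\<lambda>i. v $ i) k" by (rule mvN_vec[OF v(1) B k])
      also have "\<dots> = mvN N K (\<lambda>i. v $ i) k + \<epsilon> * v $ k" unfolding B_def by (rule mvN_B[OF K k])
      finally show "(B *\<^sub>v v) $ k = mvN N K (\<lambda>i. v $ i) k + \<epsilon> * v $ k" .
    qed simp
    also have "\<dots> = dotN N (\<lambda>i. v $ i) (mvN N K (\<lambda>i. v $ i)) + \<epsilon> * (\<Sum>i<N. (v $ i)^2)"
      by (simp add: dotN_def sum.distrib sum_distrib_left algebra_simps power2_eq_square)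
    also have "\<dots> > 0"
      using pd_of_spd[OF assms(1) v(1,2)] assms(2) by (simp add: add_pos_nonneg sum_nonneg)
    finally show False by simp
  qed
  from det_non_zero_imp_unit[OF B this, of undefined]
  show ?thesis unfolding B_def[symmetric] Units_def ring_mat_def by auto
qed

lemma minv_props:
  assumes "sym_pos_def N K" "\<epsilon> > 0"
  defines "B \<equiv> K + \<epsilon> \<cdot>\<^sub>m 1\<^sub>m N"
  shows "minv B \<in> carrier_mat N N" "B * minv B = 1\<^sub>m N" "minv B * B = 1\<^sub>m N"
proof -
  have "dim_row B = N" unfolding B_def by simp
  from someI_ex[OF inv_exists[OF assms(1,2)]]
  show "minv B \<in> carrier_mat N N" "B * minv B = 1\<^sub>m N" "minv B * B = 1\<^sub>m N"
    unfolding minv_def B_def by auto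
qed

lemma mvN_mult:
  assumes "X \<in> carrier_mat n n" "Y \<in> carrier_mat n n" "j < n"
  shows "mvN n X (mvN n Y s) j = mvN n (X * Y) s j"
proof -
  have "mvN n X (mvN n Y s) j = (\<Sum>k<n. \<Sum>l<n. X $$ (j,k) * Y $$ (k,l) * s l)"
    by (simp add: mvN_def sum_distrib_left mult.assoc)
  also have "\<dots> = (\<Sum>l<n. \<Sum>k<n. X $$ (j,k) * Y $$ (k,l) * s l)" by (rule sum.swap)
  also have "\<dots> = mvN n (X * Y) s j"
    unfolding mvN_def using assms by (auto simp: mult_idx[OF assms(1,2)] sum_distrib_right simp del: index_mult_mat intro!: sum.cong)
  finally show ?thesis .
qed

lemma mvN_one: "j < n \<Longrightarrow> mvN n (1\<^sub>m n) s j = s j"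
proof -
  assume j: "j < n"
  have "mvN n (1\<^sub>m n) s j = (\<Sum>k<n. if j = k then s k else 0)"
    unfolding mvN_def using j by (intro sum.cong refl) auto
  thus ?thesis using j by simp
qed

lemma hform:
  assumes sym: "symN N K" and K: "K \<in> carrier_mat N N" and A: "A \<in> carrier_mat N d" and S: "S \<in> carrier_mat d N"
  shows "frob_sq (A\<^sup>T * K - S) + \<epsilon> * mtrace (A\<^sup>T * K * A) =
    (\<Sum>c<d. (\<Sum>j<N. (mvN N K (\<lambda>k. A $$ (k,c)) j - S $$ (c,j))^2)
       + \<epsilon> * dotN N (\<lambda>k. A $$ (k,c)) (mvN N K (\<lambda>k. A $$ (k,c))))"
proof -
  have AT: "A\<^sup>T \<in> carrier_mat d N" using A by simp
  have AK: "A\<^sup>T * K \<in> carrier_mat d N" using AT K by simp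
  have e1: "(A\<^sup>T * K) $$ (c,j) = mvN N K (\<lambda>k. A $$ (k,c)) j" if "c < d" "j < N" for c j
  proof -
    have "(A\<^sup>T * K) $$ (c,j) = (\<Sum>k<N. A\<^sup>T $$ (c,k) * K $$ (k,j))" by (rule mult_idx[OF AT K that])
    also have "\<dots> = mvN N K (\<lambda>k. A $$ (k,c)) j"
      unfolding mvN_def using that A sym unfolding symN_def by (intro sum.cong refl) auto
    finally show ?thesis .
  qed
  have f: "frob_sq (A\<^sup>T * K - S) = (\<Sum>c<d. \<Sum>j<N. (mvN N K (\<lambda>k. A $$ (k,c)) j - S $$ (c,j))^2)"
    unfolding frob_sq_def using S AK by (auto simp: e1 intro!: sum.cong)
  have t: "mtrace (A\<^sup>T * K * A) = (\<Sum>c<d. dotN N (\<lambda>k. A $$ (k,c)) (mvN N K (\<lambda>k. A $$ (k,c))))"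
    unfolding mtrace_def
  proof -
    have "dim_row (A\<^sup>T * K * A) = d" using AK A by simp
    moreover have "(A\<^sup>T * K * A) $$ (c,c) = dotN N (\<lambda>k. A $$ (k,c)) (mvN N K (\<lambda>k. A $$ (k,c)))" if "c < d" for c
    proof -
      have "(A\<^sup>T * K * A) $$ (c,c) = (\<Sum>j<N. (A\<^sup>T * K) $$ (c,j) * A $$ (j,c))" by (rule mult_idx[OF AK A that that])
      also have "\<dots> = dotN N (\<lambda>k. A $$ (k,c)) (mvN N K (\<lambda>k. A $$ (k,c)))"
        unfolding dotN_def using that by (intro sum.cong refl) (simp add: e1 mult.commute)
      finally show ?thesis .
    qed
    ultimately show "(\<Sum>i<dim_row (A\<^sup>T * K * A). (A\<^sup>T * K * A) $$ (i, i)) = (\<Sum>c<d. dotN N (\<lambda>k. A $$ (k,c)) (mvN N K (\<lambda>k. A $$ (k,c))))"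
      by simp
  qed
  show ?thesis unfolding f t by (simp add: sum.distrib sum_distrib_left)
qed

lemma dot_qf: "dotN n (mvN n X s) s = qf n s X"
  unfolding dotN_def mvN_def qf_def
  by (simp add: sum_distrib_right sum_distrib_left mult.commute mult.left_commute)

lemma per_m:
  assumes spd: "sym_pos_def N K" and eps: "\<epsilon> > 0" and A: "A \<in> carrier_mat N d" and S: "S \<in> carrier_mat d N"
  defines "Bi \<equiv> minv (K + \<epsilon> \<cdot>\<^sub>m 1\<^sub>m N)"
  shows "frob_sq (A\<^sup>T * K - S) + \<epsilon> * mtrace (A\<^sup>T * K * A) \<ge> \<epsilon> * (\<Sum>c<d. qf N (\<lambda>k. S $$ (c,k)) Bi)"
    and "frob_sq ((Bi * S\<^sup>T)\<^sup>T * K - S) + \<epsilon> * mtrace ((Bi * S\<^sup>T)\<^sup>T * K * (Bi * S\<^sup>T))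
          = \<epsilon> * (\<Sum>c<d. qf N (\<lambda>k. S $$ (c,k)) Bi)"
proof -
  have K: "K \<in> carrier_mat N N" using spd unfolding sym_pos_def_def by auto
  have sym: "symN N K" by (rule sym_of_spd[OF spd])
  note mp = minv_props[OF spd eps, folded Bi_def]
  have Bi: "Bi \<in> carrier_mat N N" by (rule mp(1))
  have B: "K + \<epsilon> \<cdot>\<^sub>m 1\<^sub>m N \<in> carrier_mat N N" using K by simp
  define a' where "a' c = mvN N Bi (\<lambda>k. S $$ (c,k))" for c
  have eq: "\<forall>j<N. mvN N K (a' c) j + \<epsilon> * a' c j = S $$ (c,j)" for c
  proof (intro allI impI)
    fix j assume j: "j < N"
    have "mvN N K (a' c) j + \<epsilon> * a' c j = mvN N (K + \<epsilon> \<cdot>\<^sub>m 1\<^sub>m N) (a' c) j"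
      by (rule mvN_B[OF K j, symmetric])
    also have "\<dots> = mvN N ((K + \<epsilon> \<cdot>\<^sub>m 1\<^sub>m N) * Bi) (\<lambda>k. S $$ (c,k)) j"
      unfolding a'_def by (rule mvN_mult[OF B Bi j])
    also have "\<dots> = S $$ (c,j)" unfolding mp(2) by (rule mvN_one[OF j])
    finally show "mvN N K (a' c) j + \<epsilon> * a' c j = S $$ (c,j)" .
  qed
  have val: "\<epsilon> * dotN N (a' c) (\<lambda>k. S $$ (c,k)) = \<epsilon> * qf N (\<lambda>k. S $$ (c,k)) Bi" for c
    unfolding a'_def dot_qf ..
  have psd: "dotN N x (mvN N K x) \<ge> 0" for x by (rule psd_of_spd[OF spd])
  have ci: "(\<Sum>j<N. (mvN N K a j - S $$ (c,j))^2) + \<epsilon> * dotN N a (mvN N K a)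
       = \<epsilon> * qf N (\<lambda>k. S $$ (c,k)) Bi + (\<Sum>j<N. (mvN N K (\<lambda>k. a k - a' c k) j)^2)
          + \<epsilon> * dotN N (\<lambda>k. a k - a' c k) (mvN N K (\<lambda>k. a k - a' c k))" for a c
    using core_identity[OF sym eq[of c], of a] val[of c] by simp
  show "frob_sq (A\<^sup>T * K - S) + \<epsilon> * mtrace (A\<^sup>T * K * A) \<ge> \<epsilon> * (\<Sum>c<d. qf N (\<lambda>k. S $$ (c,k)) Bi)"
    unfolding hform[OF sym K A S] sum_distrib_left
  proof (rule sum_mono)
    fix c assume "c \<in> {..<d}"
    show "\<epsilon> * qf N (\<lambda>k. S $$ (c,k)) Bi \<le> (\<Sum>j<N. (mvN N K (\<lambda>k. A $$ (k,c)) j - S $$ (c,j))^2)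
       + \<epsilon> * dotN N (\<lambda>k. A $$ (k,c)) (mvN N K (\<lambda>k. A $$ (k,c)))"
      unfolding ci using psd eps by (simp add: sum_nonneg)
  qed
  have As: "Bi * S\<^sup>T \<in> carrier_mat N d" using Bi S by simp
  show "frob_sq ((Bi * S\<^sup>T)\<^sup>T * K - S) + \<epsilon> * mtrace ((Bi * S\<^sup>T)\<^sup>T * K * (Bi * S\<^sup>T))
          = \<epsilon> * (\<Sum>c<d. qf N (\<lambda>k. S $$ (c,k)) Bi)"
    unfolding hform[OF sym K As S] sum_distrib_left
  proof (rule sum.cong[OF refl])
    fix c assume c: "c \<in> {..<d}"
    have z: "(Bi * S\<^sup>T) $$ (k,c) - a' c k = 0" if "k < N" for k
    proof -
      have "(Bi * S\<^sup>T) $$ (k,c) = (\<Sum>l<N. Bi $$ (k,l) * S\<^sup>T $$ (l,c))"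
        by (rule mult_idx[OF Bi _ that]) (use S c in auto)
      also have "\<dots> = a' c k" unfolding a'_def mvN_def using S c by (intro sum.cong refl) auto
      finally show ?thesis by simp
    qed
    have m0: "mvN N K (\<lambda>k. (Bi * S\<^sup>T) $$ (k,c) - a' c k) j = 0" for j
      unfolding mvN_def by (rule sum.neutral) (simp add: z)
    have d0: "dotN N (\<lambda>k. (Bi * S\<^sup>T) $$ (k,c) - a' c k) y = 0" for y
      unfolding dotN_def by (rule sum.neutral) (simp add: z)
    show "(\<Sum>j<N. (mvN N K (\<lambda>k. (Bi * S\<^sup>T) $$ (k,c)) j - S $$ (c,j))^2)
       + \<epsilon> * dotN N (\<lambda>k. (Bi * S\<^sup>T) $$ (k,c)) (mvN N K (\<lambda>k. (Bi * S\<^sup>T) $$ (k,c)))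
       = \<epsilon> * qf N (\<lambda>k. S $$ (c,k)) Bi"
      unfolding ci m0 d0 by simp
  qed
qed

definition qff :: "nat \<Rightarrow> (nat \<Rightarrow> real) \<Rightarrow> (nat \<Rightarrow> nat \<Rightarrow> real) \<Rightarrow> real" where
  "qff n s F = (\<Sum>k<n. \<Sum>l<n. s k * F k l * s l)"

lemma qf_qff: "(\<And>k l. k < n \<Longrightarrow> l < n \<Longrightarrow> X $$ (k,l) = F k l) \<Longrightarrow> qf n s X = qff n s F"
  unfolding qf_def qff_def by (intro sum.cong refl) auto

lemma qff_sum: "finite I \<Longrightarrow> qff n s (\<lambda>k l. \<Sum>m\<in>I. F m k l) = (\<Sum>m\<in>I. qff n s (F m))"
proof -
  have "qff n s (\<lambda>k l. \<Sum>m\<in>I. F m k l) = (\<Sum>k<n. \<Sum>l<n. \<Sum>m\<in>I. s k * F m k l * s l)"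
    unfolding qff_def by (simp add: sum_distrib_left sum_distrib_right)
  also have "\<dots> = (\<Sum>k<n. \<Sum>m\<in>I. \<Sum>l<n. s k * F m k l * s l)"
    by (intro sum.cong refl) (rule sum.swap)
  also have "\<dots> = (\<Sum>m\<in>I. \<Sum>k<n. \<Sum>l<n. s k * F m k l * s l)" by (rule sum.swap)
  finally show ?thesis by (simp add: qff_def)
qed

lemma qff_lin: "qff n s (\<lambda>k l. a * F k l - b * G k l) = a * qff n s F - b * qff n s G"
  unfolding qff_def by (simp add: sum_subtractf sum_distrib_left algebra_simps)

lemma qff_id: "qff n s (\<lambda>k l. if k = l then 1 else 0) = (\<Sum>k<n. (s k)^2)"
proof -
  have "qff n s (\<lambda>k l. if k = l then 1 else 0) = (\<Sum>k<n. \<Sum>l<n. if k = l then s k * s l else 0)"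
    unfolding qff_def by (intro sum.cong refl) auto
  thus ?thesis by (simp add: power2_eq_square)
qed

lemma tr_qf:
  assumes S: "S \<in> carrier_mat d n" and X: "X \<in> carrier_mat n n"
  shows "mtrace (S * X * S\<^sup>T) = (\<Sum>c<d. qf n (\<lambda>k. S $$ (c,k)) X)"
proof -
  have SX: "S * X \<in> carrier_mat d n" using S X by simp
  have ST: "S\<^sup>T \<in> carrier_mat n d" using S by simp
  have "(S * X * S\<^sup>T) $$ (c,c) = qf n (\<lambda>k. S $$ (c,k)) X" if c: "c < d" for c
  proof -
    have "(S * X * S\<^sup>T) $$ (c,c) = (\<Sum>l<n. (S * X) $$ (c,l) * S\<^sup>T $$ (l,c))" by (rule mult_idx[OF SX ST c c])
    also have "\<dots> = (\<Sum>l<n. (\<Sum>k<n. S $$ (c,k) * X $$ (k,l)) * S $$ (c,l))"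
      using c S by (intro sum.cong refl) (simp add: mult_idx[OF S X c] del: index_mult_mat)
    also have "\<dots> = (\<Sum>l<n. \<Sum>k<n. S $$ (c,k) * X $$ (k,l) * S $$ (c,l))" by (simp add: sum_distrib_right)
    also have "\<dots> = qf n (\<lambda>k. S $$ (c,k)) X" unfolding qf_def by (rule sum.swap)
    finally show ?thesis .
  qed
  moreover have "dim_row (S * X * S\<^sup>T) = d" using S by simp
  ultimately show ?thesis unfolding mtrace_def by simp
qed

lemma rows_unit:
  fixes S :: "real mat"
  assumes S: "S \<in> carrier_mat d n" and SS: "S * S\<^sup>T = 1\<^sub>m d" and c: "c < d"
  shows "(\<Sum>k<n. (S $$ (c,k))^2) = 1"
proof -
  have "1 = (S * S\<^sup>T) $$ (c,c)" using SS c by simp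
  also have "\<dots> = (\<Sum>k<n. S $$ (c,k) * S\<^sup>T $$ (k,c))" by (rule mult_idx) (use S c in auto)
  also have "\<dots> = (\<Sum>k<n. (S $$ (c,k))^2)" using S c by (intro sum.cong refl) (auto simp: power2_eq_square simp del: power2_abs)
  finally show ?thesis by simp
qed

lemma lap_carrier: "weighted_adj N W \<Longrightarrow> laplacian W \<in> carrier_mat N N"
  unfolding weighted_adj_def laplacian_def by auto

lemma Cg_carrier: "L \<in> carrier_mat N N \<Longrightarrow> Cg N M K \<epsilon> \<gamma> L \<in> carrier_mat N N"
  unfolding Cg_def by auto

lemma Cg_entry:
  assumes K: "\<forall>m\<in>{1..M}. sym_pos_def N (K m)" and eps: "\<epsilon> > 0" and L: "L \<in> carrier_mat N N"
    and k: "k < N" and l: "l < N"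
  shows "Cg N M K \<epsilon> \<gamma> L $$ (k,l) = (\<Sum>m\<in>{1..M}. (if k = l then 1 else 0) - \<epsilon> * minv (K m + \<epsilon> \<cdot>\<^sub>m 1\<^sub>m N) $$ (k,l)) - \<gamma> * L $$ (k,l)"
proof -
  have "(minv (K m + \<epsilon> \<cdot>\<^sub>m 1\<^sub>m N) * K m) $$ (k,l) = (if k = l then 1 else 0) - \<epsilon> * minv (K m + \<epsilon> \<cdot>\<^sub>m 1\<^sub>m N) $$ (k,l)"
    if m: "m \<in> {1..M}" for m
  proof -
    have spd: "sym_pos_def N (K m)" using K m by auto
    have Km: "K m \<in> carrier_mat N N" using spd unfolding sym_pos_def_def by auto
    note mp = minv_props[OF spd eps]
    define Bi where "Bi = minv (K m + \<epsilon> \<cdot>\<^sub>m 1\<^sub>m N)"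
    have Bi: "Bi \<in> carrier_mat N N" using mp(1) Bi_def by simp
    have "1\<^sub>m N = Bi * (K m + \<epsilon> \<cdot>\<^sub>m 1\<^sub>m N)" using mp(3) Bi_def by simp
    also have "\<dots> = Bi * K m + \<epsilon> \<cdot>\<^sub>m Bi"
    proof -
      have "Bi * (K m + \<epsilon> \<cdot>\<^sub>m 1\<^sub>m N) = Bi * K m + Bi * (\<epsilon> \<cdot>\<^sub>m 1\<^sub>m N)"
        by (rule mult_add_distrib_mat[OF Bi Km]) auto
      also have "Bi * (\<epsilon> \<cdot>\<^sub>m 1\<^sub>m N) = \<epsilon> \<cdot>\<^sub>m (Bi * 1\<^sub>m N)" by (rule mult_smult_distrib[OF Bi]) auto
      also have "Bi * 1\<^sub>m N = Bi" using Bi by (rule right_mult_one_mat)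
      finally show ?thesis .
    qed
    finally have "1\<^sub>m N $$ (k,l) = (Bi * K m + \<epsilon> \<cdot>\<^sub>m Bi) $$ (k,l)" by simp
    hence "(if k = l then 1 else 0) = (Bi * K m) $$ (k,l) + \<epsilon> * Bi $$ (k,l)" using k l Bi Km by simp
    thus ?thesis unfolding Bi_def by simp
  qed
  thus ?thesis unfolding Cg_def using k l L by simp
qed

lemma qff_diff: "qff n s (\<lambda>k l. F k l - b * G k l) = qff n s F - b * qff n s G"
  unfolding qff_def by (simp add: sum_subtractf sum_distrib_left algebra_simps)

lemma Cg_qf:
  assumes K: "\<forall>m\<in>{1..M}. sym_pos_def N (K m)" and eps: "\<epsilon> > 0" and L: "L \<in> carrier_mat N N"
    and S: "S \<in> carrier_mat d N" and SS: "S * S\<^sup>T = 1\<^sub>m d"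
  shows "(\<Sum>c<d. qf N (\<lambda>k. S $$ (c,k)) (Cg N M K \<epsilon> \<gamma> L)) =
     real M * real d - (\<epsilon> * (\<Sum>m\<in>{1..M}. \<Sum>c<d. qf N (\<lambda>k. S $$ (c,k)) (minv (K m + \<epsilon> \<cdot>\<^sub>m 1\<^sub>m N)))
        + \<gamma> * (\<Sum>c<d. qf N (\<lambda>k. S $$ (c,k)) L))"
proof -
  let ?Bi = "\<lambda>m. minv (K m + \<epsilon> \<cdot>\<^sub>m 1\<^sub>m N)"
  have one: "qf N (\<lambda>k. S $$ (c,k)) (Cg N M K \<epsilon> \<gamma> L) =
     real M - \<epsilon> * (\<Sum>m\<in>{1..M}. qf N (\<lambda>k. S $$ (c,k)) (?Bi m)) - \<gamma> * qf N (\<lambda>k. S $$ (c,k)) L"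
    if c: "c < d" for c
  proof -
    let ?s = "\<lambda>k. S $$ (c,k)"
    have "qf N ?s (Cg N M K \<epsilon> \<gamma> L) = qff N ?s (\<lambda>k l. (\<Sum>m\<in>{1..M}. (if k = l then 1 else 0) - \<epsilon> * ?Bi m $$ (k,l)) - \<gamma> * L $$ (k,l))"
      by (rule qf_qff) (rule Cg_entry[OF K eps L])
    also have "\<dots> = qff N ?s (\<lambda>k l. (\<Sum>m\<in>{1..M}. (if k = l then 1 else 0) - \<epsilon> * ?Bi m $$ (k,l))) - \<gamma> * qff N ?s (\<lambda>k l. L $$ (k,l))"
      by (rule qff_diff)
    also have "qff N ?s (\<lambda>k l. (\<Sum>m\<in>{1..M}. (if k = l then 1 else 0) - \<epsilon> * ?Bi m $$ (k,l)))
       = (\<Sum>m\<in>{1..M}. qff N ?s (\<lambda>k l. (if k = l then 1 else 0) - \<epsilon> * ?Bi m $$ (k,l)))"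
      by (rule qff_sum) simp
    also have "\<dots> = (\<Sum>m\<in>{1..M}. 1 - \<epsilon> * qf N ?s (?Bi m))"
    proof (rule sum.cong[OF refl])
      fix m
      have "qff N ?s (\<lambda>k l. (if k = l then 1 else 0) - \<epsilon> * ?Bi m $$ (k,l))
         = qff N ?s (\<lambda>k l. if k = l then 1 else 0) - \<epsilon> * qff N ?s (\<lambda>k l. ?Bi m $$ (k,l))"
        by (rule qff_diff)
      also have "qff N ?s (\<lambda>k l. if k = l then 1 else 0) = 1"
        unfolding qff_id by (rule rows_unit[OF S SS c])
      also have "qff N ?s (\<lambda>k l. ?Bi m $$ (k,l)) = qf N ?s (?Bi m)" by (rule qf_qff[symmetric]) simp
      finally show "qff N ?s (\<lambda>k l. (if k = l then 1 else 0) - \<epsilon> * ?Bi m $$ (k,l)) = 1 - \<epsilon> * qf N ?s (?Bi m)" .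
    qed
    also have "qff N ?s (\<lambda>k l. L $$ (k,l)) = qf N ?s L" by (rule qf_qff[symmetric]) simp
    finally show ?thesis by (simp add: sum_subtractf sum_distrib_left)
  qed
  have "(\<Sum>c<d. qf N (\<lambda>k. S $$ (c,k)) (Cg N M K \<epsilon> \<gamma> L)) =
     (\<Sum>c<d. real M - \<epsilon> * (\<Sum>m\<in>{1..M}. qf N (\<lambda>k. S $$ (c,k)) (?Bi m)) - \<gamma> * qf N (\<lambda>k. S $$ (c,k)) L)"
    by (intro sum.cong refl) (simp add: one)
  also have "\<dots> = real M * real d - (\<epsilon> * (\<Sum>c<d. \<Sum>m\<in>{1..M}. qf N (\<lambda>k. S $$ (c,k)) (?Bi m))
        + \<gamma> * (\<Sum>c<d. qf N (\<lambda>k. S $$ (c,k)) L))"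
    by (simp add: sum_subtractf sum_distrib_left algebra_simps sum.distrib)
  also have "(\<Sum>c<d. \<Sum>m\<in>{1..M}. qf N (\<lambda>k. S $$ (c,k)) (?Bi m)) = (\<Sum>m\<in>{1..M}. \<Sum>c<d. qf N (\<lambda>k. S $$ (c,k)) (?Bi m))"
    by (rule sum.swap)
  finally show ?thesis .
qed

lemma obj_bounds:
  assumes K: "\<forall>m\<in>{1..M}. sym_pos_def N (K m)" and eps: "\<epsilon> > 0" and L: "L \<in> carrier_mat N N"
    and S: "S \<in> carrier_mat d N" and SS: "S * S\<^sup>T = 1\<^sub>m d"
  shows "gmcca_obj M K \<epsilon> \<gamma> L (\<lambda>m. minv (K m + \<epsilon> \<cdot>\<^sub>m 1\<^sub>m N) * S\<^sup>T) S
      = real M * real d - (\<Sum>c<d. qf N (\<lambda>k. S $$ (c,k)) (Cg N M K \<epsilon> \<gamma> L))"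
    and "(\<forall>m\<in>{1..M}. A m \<in> carrier_mat N d) \<Longrightarrow> gmcca_obj M K \<epsilon> \<gamma> L A S
      \<ge> real M * real d - (\<Sum>c<d. qf N (\<lambda>k. S $$ (c,k)) (Cg N M K \<epsilon> \<gamma> L))"
proof -
  let ?Bi = "\<lambda>m. minv (K m + \<epsilon> \<cdot>\<^sub>m 1\<^sub>m N)"
  have reform: "gmcca_obj M K \<epsilon> \<gamma> L A' S = (\<Sum>m\<in>{1..M}. frob_sq ((A' m)\<^sup>T * K m - S) + \<epsilon> * mtrace ((A' m)\<^sup>T * K m * A' m))
     + \<gamma> * (\<Sum>c<d. qf N (\<lambda>k. S $$ (c,k)) L)" for A'
    unfolding gmcca_obj_def tr_qf[OF S L] by (simp add: sum.distrib sum_distrib_left)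
  note R = Cg_qf[OF K eps L S SS, of \<gamma>]
  show "gmcca_obj M K \<epsilon> \<gamma> L (\<lambda>m. ?Bi m * S\<^sup>T) S
      = real M * real d - (\<Sum>c<d. qf N (\<lambda>k. S $$ (c,k)) (Cg N M K \<epsilon> \<gamma> L))"
    unfolding reform R
  proof -
    have "(\<Sum>m\<in>{1..M}. frob_sq ((?Bi m * S\<^sup>T)\<^sup>T * K m - S) + \<epsilon> * mtrace ((?Bi m * S\<^sup>T)\<^sup>T * K m * (?Bi m * S\<^sup>T)))
      = (\<Sum>m\<in>{1..M}. \<epsilon> * (\<Sum>c<d. qf N (\<lambda>k. S $$ (c,k)) (?Bi m)))"
    proof (rule sum.cong[OF refl])
      fix m assume "m \<in> {1..M}"
      hence spd: "sym_pos_def N (K m)" using K by auto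
      hence "K m \<in> carrier_mat N N" unfolding sym_pos_def_def by auto
      show "frob_sq ((?Bi m * S\<^sup>T)\<^sup>T * K m - S) + \<epsilon> * mtrace ((?Bi m * S\<^sup>T)\<^sup>T * K m * (?Bi m * S\<^sup>T))
         = \<epsilon> * (\<Sum>c<d. qf N (\<lambda>k. S $$ (c,k)) (?Bi m))"
        by (rule per_m(2)[OF spd eps zero_carrier_mat S])
    qed
    thus "(\<Sum>m\<in>{1..M}. frob_sq ((?Bi m * S\<^sup>T)\<^sup>T * K m - S) + \<epsilon> * mtrace ((?Bi m * S\<^sup>T)\<^sup>T * K m * (?Bi m * S\<^sup>T)))
        + \<gamma> * (\<Sum>c<d. qf N (\<lambda>k. S $$ (c,k)) L) =
      real M * real d - (real M * real d - (\<epsilon> * (\<Sum>m\<in>{1..M}. \<Sum>c<d. qf N (\<lambda>k. S $$ (c,k)) (?Bi m))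
        + \<gamma> * (\<Sum>c<d. qf N (\<lambda>k. S $$ (c,k)) L)))"
      by (simp add: sum_distrib_left)
  qed
  assume A: "\<forall>m\<in>{1..M}. A m \<in> carrier_mat N d"
  have "(\<Sum>m\<in>{1..M}. \<epsilon> * (\<Sum>c<d. qf N (\<lambda>k. S $$ (c,k)) (?Bi m)))
     \<le> (\<Sum>m\<in>{1..M}. frob_sq ((A m)\<^sup>T * K m - S) + \<epsilon> * mtrace ((A m)\<^sup>T * K m * A m))"
  proof (rule sum_mono)
    fix m assume m: "m \<in> {1..M}"
    hence spd: "sym_pos_def N (K m)" using K by auto
    show "\<epsilon> * (\<Sum>c<d. qf N (\<lambda>k. S $$ (c,k)) (?Bi m))
     \<le> frob_sq ((A m)\<^sup>T * K m - S) + \<epsilon> * mtrace ((A m)\<^sup>T * K m * A m)"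
      by (rule per_m(1)[OF spd eps _ S]) (use A m in auto)
  qed
  thus "gmcca_obj M K \<epsilon> \<gamma> L A S
      \<ge> real M * real d - (\<Sum>c<d. qf N (\<lambda>k. S $$ (c,k)) (Cg N M K \<epsilon> \<gamma> L))"
    unfolding reform R by (simp add: sum_distrib_left)
qed


lemma ind_sum: "d \<le> N \<Longrightarrow> (\<Sum>j<N. (if j < d then 1 else 0::real)) = real d"
proof -
  assume dN: "d \<le> N"
  have "{..<N} \<inter> {j. j < d} = {..<d}" using dN by auto
  thus ?thesis by (simp add: sum.If_cases)
qed

lemma kyfan_arith:
  fixes lam w :: "nat \<Rightarrow> real"
  assumes dN: "d \<le> N" and w: "\<forall>j<N. 0 \<le> w j \<and> w j \<le> 1" and ws: "(\<Sum>j<N. w j) = real d"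
    and sorted: "\<forall>i<N. \<forall>j<N. i \<le> j \<longrightarrow> lam j \<le> lam i"
  shows "(\<Sum>j<N. lam j * w j) \<le> (\<Sum>j<N. lam j * (if j < d then 1 else 0))"
proof -
  define c where "c = (if d < N then lam d else lam (N - 1))"
  have hi: "c \<le> lam j" if "j < N" "j < d" for j
    using that sorted dN unfolding c_def by (cases "d < N") auto
  have lo: "lam j \<le> c" if "j < N" "\<not> j < d" for j
    using that sorted dN unfolding c_def by (cases "d < N") auto
  have "(\<Sum>j<N. lam j * w j) - (\<Sum>j<N. lam j * (if j < d then 1 else 0)) = (\<Sum>j<N. lam j * (w j - (if j < d then 1 else 0)))"
    by (simp add: sum_subtractf algebra_simps)
  also have "\<dots> \<le> (\<Sum>j<N. c * (w j - (if j < d then 1 else 0)))"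
  proof (rule sum_mono)
    fix j assume j: "j \<in> {..<N}"
    show "lam j * (w j - (if j < d then 1 else 0)) \<le> c * (w j - (if j < d then 1 else 0))"
    proof (cases "j < d")
      case True
      thus ?thesis using hi[of j] w j by (simp add: mult_right_mono_neg)
    next
      case False
      thus ?thesis using lo[of j] w j by (simp add: mult_right_mono)
    qed
  qed
  also have "\<dots> = c * ((\<Sum>j<N. w j) - (\<Sum>j<N. (if j < d then 1 else 0)))"
    by (simp only: sum_subtractf sum_distrib_left right_diff_distrib)
  also have "\<dots> = 0" using ws ind_sum[OF dN] by simp
  finally show ?thesis by simp
qed

lemma C_decomp:
  fixes C U :: "real mat"
  assumes C: "C \<in> carrier_mat N N" and U: "U \<in> carrier_mat N N" and UtU: "U\<^sup>T * U = 1\<^sub>m N"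
    and eig: "\<forall>i<N. eigenvector C (col U i) (lam i)" and k: "k < N" and l: "l < N"
  shows "C $$ (k,l) = (\<Sum>j<N. lam j * U $$ (k,j) * U $$ (l,j))"
proof -
  have UT: "U\<^sup>T \<in> carrier_mat N N" using U by simp
  have UUt: "U * U\<^sup>T = 1\<^sub>m N" by (rule mat_mult_left_right_inverse[OF UT U UtU])
  have CU: "(C * U) $$ (k,j) = lam j * U $$ (k,j)" if j: "j < N" for j
  proof -
    have "col (C * U) j = C *\<^sub>v col U j" by (rule col_mult2[OF C U j])
    also have "\<dots> = lam j \<cdot>\<^sub>v col U j" using eig j unfolding eigenvector_def by auto
    finally have "col (C * U) j $ k = (lam j \<cdot>\<^sub>v col U j) $ k" by simp
    thus ?thesis using j k U C by simp
  qed
  have "C = C * (U * U\<^sup>T)" unfolding UUt using C by simp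
  also have "\<dots> = (C * U) * U\<^sup>T" using C U UT by simp
  finally have "C $$ (k,l) = ((C * U) * U\<^sup>T) $$ (k,l)" by simp
  also have "\<dots> = (\<Sum>j<N. (C * U) $$ (k,j) * U\<^sup>T $$ (j,l))"
    by (rule mult_idx[OF _ UT k l]) (use C U in simp)
  also have "\<dots> = (\<Sum>j<N. lam j * U $$ (k,j) * U $$ (l,j))"
    using U l by (intro sum.cong refl) (simp add: CU del: index_mult_mat)
  finally show ?thesis .
qed

lemma qf_eig:
  fixes C U :: "real mat"
  assumes C: "C \<in> carrier_mat N N" and U: "U \<in> carrier_mat N N" and UtU: "U\<^sup>T * U = 1\<^sub>m N"
    and eig: "\<forall>i<N. eigenvector C (col U i) (lam i)"
  shows "qf N s C = (\<Sum>j<N. lam j * (\<Sum>k<N. s k * U $$ (k,j))^2)"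
proof -
  have "qf N s C = qff N s (\<lambda>k l. \<Sum>j<N. lam j * U $$ (k,j) * U $$ (l,j))"
    by (rule qf_qff) (rule C_decomp[OF C U UtU eig])
  also have "\<dots> = (\<Sum>j<N. qff N s (\<lambda>k l. lam j * U $$ (k,j) * U $$ (l,j)))"
    by (rule qff_sum) simp
  also have "\<dots> = (\<Sum>j<N. lam j * (\<Sum>k<N. s k * U $$ (k,j))^2)"
  proof (rule sum.cong[OF refl])
    fix j
    show "qff N s (\<lambda>k l. lam j * U $$ (k,j) * U $$ (l,j)) = lam j * (\<Sum>k<N. s k * U $$ (k,j))^2"
    proof -
      have "qff N s (\<lambda>k l. lam j * U $$ (k,j) * U $$ (l,j)) = lam j * (\<Sum>k<N. \<Sum>l<N. (s k * U $$ (k,j)) * (s l * U $$ (l,j)))"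
        unfolding qff_def sum_distrib_left by (intro sum.cong refl) (simp add: algebra_simps)
      also have "\<dots> = lam j * (\<Sum>k<N. s k * U $$ (k,j))^2"
        by (simp add: power2_eq_square sum_product)
      finally show ?thesis .
    qed
  qed
  finally show ?thesis .
qed

lemma w_props:
  fixes S U :: "real mat"
  assumes S: "S \<in> carrier_mat d N" and SS: "S * S\<^sup>T = 1\<^sub>m d"
    and U: "U \<in> carrier_mat N N" and UtU: "U\<^sup>T * U = 1\<^sub>m N"
  defines "w \<equiv> \<lambda>j. (\<Sum>c<d. (\<Sum>k<N. S $$ (c,k) * U $$ (k,j))^2)"
  shows "\<forall>j<N. 0 \<le> w j \<and> w j \<le> 1" and "(\<Sum>j<N. w j) = real d"
proof -
  have UT: "U\<^sup>T \<in> carrier_mat N N" using U by simp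
  have UUt: "U * U\<^sup>T = 1\<^sub>m N" by (rule mat_mult_left_right_inverse[OF UT U UtU])
  define Y where "Y = S * U"
  have Y: "Y \<in> carrier_mat d N" unfolding Y_def using S U by simp
  have Yidx: "Y $$ (c,j) = (\<Sum>k<N. S $$ (c,k) * U $$ (k,j))" if "c < d" "j < N" for c j
    unfolding Y_def by (rule mult_idx[OF S U that])
  have ST: "S\<^sup>T \<in> carrier_mat N d" using S by simp
  have YT: "Y\<^sup>T = U\<^sup>T * S\<^sup>T" unfolding Y_def by (rule transpose_mult[OF S U])
  have "Y * Y\<^sup>T = S * (U * (U\<^sup>T * S\<^sup>T))" unfolding YT unfolding Y_def using assoc_mult_mat[OF S U, of "U\<^sup>T * S\<^sup>T" d] UT ST by simp
  also have "U * (U\<^sup>T * S\<^sup>T) = S\<^sup>T"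
  proof -
    have "U * (U\<^sup>T * S\<^sup>T) = (U * U\<^sup>T) * S\<^sup>T" by (rule assoc_mult_mat[symmetric, OF U UT ST])
    also have "\<dots> = S\<^sup>T" unfolding UUt by (rule left_mult_one_mat[OF ST])
    finally show ?thesis .
  qed
  finally have YY: "Y * Y\<^sup>T = 1\<^sub>m d" using SS by simp
  have wY: "w j = (\<Sum>c<d. (Y $$ (c,j))^2)" if "j < N" for j
    unfolding w_def using that by (intro sum.cong refl) (simp add: Yidx)
  have "(\<Sum>j<N. w j) = (\<Sum>j<N. \<Sum>c<d. (Y $$ (c,j))^2)" by (intro sum.cong refl) (simp add: wY)
  also have "\<dots> = (\<Sum>c<d. \<Sum>j<N. (Y $$ (c,j))^2)" by (rule sum.swap)
  also have "\<dots> = (\<Sum>c<d. 1)" by (intro sum.cong refl) (simp add: rows_unit[OF Y YY])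
  finally show "(\<Sum>j<N. w j) = real d" by simp
  define P where "P = Y\<^sup>T * Y"
  have YTc: "Y\<^sup>T \<in> carrier_mat N d" using Y by simp
  have P: "P \<in> carrier_mat N N" unfolding P_def using Y by simp
  have Pidx: "P $$ (i,j) = (\<Sum>c<d. Y $$ (c,i) * Y $$ (c,j))" if "i < N" "j < N" for i j
  proof -
    have "P $$ (i,j) = (\<Sum>c<d. Y\<^sup>T $$ (i,c) * Y $$ (c,j))" unfolding P_def by (rule mult_idx[OF YTc Y that])
    thus ?thesis using that Y by simp
  qed
  have Psym: "P $$ (i,j) = P $$ (j,i)" if "i < N" "j < N" for i j
    using that by (simp add: Pidx mult.commute)
  have PP: "P * P = P"
  proof -
    have "P * P = Y\<^sup>T * (Y * (Y\<^sup>T * Y))" unfolding P_def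
      by (rule assoc_mult_mat[OF YTc Y P[unfolded P_def]])
    also have "Y * (Y\<^sup>T * Y) = (Y * Y\<^sup>T) * Y" by (rule assoc_mult_mat[symmetric, OF Y YTc Y])
    also have "Y\<^sup>T * ((Y * Y\<^sup>T) * Y) = P" unfolding YY P_def using Y by simp
    finally show ?thesis .
  qed
  show "\<forall>j<N. 0 \<le> w j \<and> w j \<le> 1"
  proof (intro allI impI conjI)
    fix j assume j: "j < N"
    show "0 \<le> w j" unfolding w_def by (simp add: sum_nonneg)
    have wP: "w j = P $$ (j,j)" using j by (simp add: wY Pidx power2_eq_square)
    have "P $$ (j,j) = (P * P) $$ (j,j)" unfolding PP ..
    also have "\<dots> = (\<Sum>k<N. P $$ (j,k) * P $$ (k,j))" by (rule mult_idx[OF P P j j])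
    also have "\<dots> = (\<Sum>k<N. (P $$ (j,k))^2)" using j by (intro sum.cong refl) (simp add: Psym[OF j] power2_eq_square)
    finally have e: "P $$ (j,j) = (\<Sum>k<N. (P $$ (j,k))^2)" .
    have "(P $$ (j,j))^2 \<le> (\<Sum>k<N. (P $$ (j,k))^2)"
      by (rule member_le_sum[where f = "\<lambda>k. (P $$ (j,k))^2"]) (use j in auto)
    hence le: "(w j)^2 \<le> w j" using e wP by simp
    show "w j \<le> 1"
    proof (rule ccontr)
      assume "\<not> w j \<le> 1"
      hence "w j * 1 < w j * w j" by (intro mult_strict_left_mono) auto
      thus False using le by (simp add: power2_eq_square)
    qed
  qed
qed


lemma total_qf:
  fixes C U :: "real mat"
  assumes C: "C \<in> carrier_mat N N" and U: "U \<in> carrier_mat N N" and UtU: "U\<^sup>T * U = 1\<^sub>m N"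
    and eig: "\<forall>i<N. eigenvector C (col U i) (lam i)"
  shows "(\<Sum>c<d. qf N (\<lambda>k. S $$ (c,k)) C) = (\<Sum>j<N. lam j * (\<Sum>c<d. (\<Sum>k<N. S $$ (c,k) * U $$ (k,j))^2))"
  unfolding qf_eig[OF C U UtU eig] sum_distrib_left by (rule sum.swap)

theorem mainTheorem4:
  fixes N M d :: nat and K :: "nat \<Rightarrow> real mat" and \<epsilon> \<gamma> :: real
    and W :: "real mat" and U Shat :: "real mat" and lam :: "nat \<Rightarrow> real"
  assumes K: "\<forall>m\<in>{1..M}. sym_pos_def N (K m)"
    and eps: "\<epsilon> > 0" and gam: "\<gamma> \<ge> 0"
    and W: "weighted_adj N W"
    and dN: "d \<le> N"
    and U: "U \<in> carrier_mat N N" "U\<^sup>T * U = 1\<^sub>m N"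
    and eig: "\<forall>i<N. eigenvector (Cg N M K \<epsilon> \<gamma> (laplacian W)) (col U i) (lam i)"
    and sorted: "\<forall>i<N. \<forall>j<N. i \<le> j \<longrightarrow> lam j \<le> lam i"
    and Shat: "Shat\<^sup>T = mat N d (\<lambda>(i,j). U $$ (i,j))"
  shows "Shat * Shat\<^sup>T = 1\<^sub>m d \<and>
    (\<forall>A S. (\<forall>m\<in>{1..M}. A m \<in> carrier_mat N d) \<longrightarrow> S \<in> carrier_mat d N \<longrightarrow>
       S * S\<^sup>T = 1\<^sub>m d \<longrightarrow>
       gmcca_obj M K \<epsilon> \<gamma> (laplacian W)
          (\<lambda>m. minv (K m + \<epsilon> \<cdot>\<^sub>m 1\<^sub>m N) * Shat\<^sup>T) Shat
       \<le> gmcca_obj M K \<epsilon> \<gamma> (laplacian W) A S)"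
proof -
  define L where "L = laplacian W"
  have L: "L \<in> carrier_mat N N" unfolding L_def by (rule lap_carrier[OF W])
  define C where "C = Cg N M K \<epsilon> \<gamma> L"
  have C: "C \<in> carrier_mat N N" unfolding C_def by (rule Cg_carrier[OF L])
  have eigC: "\<forall>i<N. eigenvector C (col U i) (lam i)" using eig unfolding C_def L_def .
  have Sh: "Shat = (mat N d (\<lambda>(i,j). U $$ (i,j)))\<^sup>T" by (metis Shat transpose_transpose)
  have ShC: "Shat \<in> carrier_mat d N" unfolding Sh by auto
  have Shi: "Shat $$ (c,k) = U $$ (k,c)" if "c < d" "k < N" for c k
    unfolding Sh using that by simp
  have UT: "U\<^sup>T \<in> carrier_mat N N" using U by simp
  have UU: "(\<Sum>k<N. U $$ (k,c) * U $$ (k,j)) = (if c = j then 1 else 0)" if "c < N" "j < N" for c j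
  proof -
    have "(U\<^sup>T * U) $$ (c,j) = (\<Sum>k<N. U\<^sup>T $$ (c,k) * U $$ (k,j))" by (rule mult_idx[OF UT U(1) that])
    also have "\<dots> = (\<Sum>k<N. U $$ (k,c) * U $$ (k,j))" using that U by (intro sum.cong refl) auto
    finally show ?thesis using U(2) that by simp
  qed
  have ShSh: "Shat * Shat\<^sup>T = 1\<^sub>m d"
  proof (rule eq_matI)
    fix c c' assume cc: "c < dim_row (1\<^sub>m d)" "c' < dim_col (1\<^sub>m d)"
    hence c: "c < d" "c' < d" by auto
    have "(Shat * Shat\<^sup>T) $$ (c,c') = (\<Sum>k<N. Shat $$ (c,k) * Shat\<^sup>T $$ (k,c'))"
      by (rule mult_idx[OF ShC _ c]) (use ShC in simp)
    also have "\<dots> = (\<Sum>k<N. U $$ (k,c) * U $$ (k,c'))" using c ShC dN by (intro sum.cong refl) (auto simp: Shi)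
    also have "\<dots> = 1\<^sub>m d $$ (c,c')" using UU[of c c'] c dN by simp
    finally show "(Shat * Shat\<^sup>T) $$ (c,c') = 1\<^sub>m d $$ (c,c')" .
  qed (use ShC in auto)
  have what: "(\<Sum>c<d. (\<Sum>k<N. Shat $$ (c,k) * U $$ (k,j))^2) = (if j < d then 1 else 0)" if j: "j < N" for j
  proof -
    have "(\<Sum>c<d. (\<Sum>k<N. Shat $$ (c,k) * U $$ (k,j))^2) = (\<Sum>c<d. if c = j then 1 else 0)"
    proof (intro sum.cong refl)
      fix c assume "c \<in> {..<d}"
      hence c: "c < d" by simp
      have "(\<Sum>k<N. Shat $$ (c,k) * U $$ (k,j)) = (\<Sum>k<N. U $$ (k,c) * U $$ (k,j))"
        using c by (intro sum.cong refl) (simp add: Shi)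
      also have "\<dots> = (if c = j then 1 else 0)" using UU[of c j] c j dN by simp
      finally show "(\<Sum>k<N. Shat $$ (c,k) * U $$ (k,j))^2 = (if c = j then 1 else 0)" by simp
    qed
    thus ?thesis by simp
  qed
  have main: "gmcca_obj M K \<epsilon> \<gamma> L (\<lambda>m. minv (K m + \<epsilon> \<cdot>\<^sub>m 1\<^sub>m N) * Shat\<^sup>T) Shat
       \<le> gmcca_obj M K \<epsilon> \<gamma> L A S"
    if A: "\<forall>m\<in>{1..M}. A m \<in> carrier_mat N d" and S: "S \<in> carrier_mat d N" and SS: "S * S\<^sup>T = 1\<^sub>m d" for A S
  proof -
    define w where "w = (\<lambda>j. (\<Sum>c<d. (\<Sum>k<N. S $$ (c,k) * U $$ (k,j))^2))"
    note wp = w_props[OF S SS U, folded w_def]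
    have "(\<Sum>c<d. qf N (\<lambda>k. S $$ (c,k)) C) = (\<Sum>j<N. lam j * w j)"
      unfolding w_def by (rule total_qf[OF C U eigC])
    also have "\<dots> \<le> (\<Sum>j<N. lam j * (if j < d then 1 else 0))"
      by (rule kyfan_arith[OF dN _ wp(2) sorted]) (use wp(1) in \<open>simp add: w_def\<close>)
    also have "\<dots> = (\<Sum>c<d. qf N (\<lambda>k. Shat $$ (c,k)) C)"
      unfolding total_qf[OF C U eigC] by (intro sum.cong refl) (simp add: what)
    finally have ineq: "(\<Sum>c<d. qf N (\<lambda>k. S $$ (c,k)) C) \<le> (\<Sum>c<d. qf N (\<lambda>k. Shat $$ (c,k)) C)" .
    show ?thesis
      using obj_bounds(1)[OF K eps L ShC ShSh, of \<gamma>] obj_bounds(2)[OF K eps L S SS A, of \<gamma>] ineq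
      unfolding C_def by linarith
  qed
  show ?thesis using ShSh main unfolding L_def by blast
qed

end
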